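(* Assume (A1)–(A5). Then for all $(t,x,y)\in(0,+\infty)\times\mathbb{R}^2$, $\underline{u}(t,x+y)-\underline{u}(t,x)\le|y|$.
   Context: Let $R,p,G:\mathbb{R}\to\mathbb{R}$; for each integer $K\ge1$ let $\delta_K>0$ with $\delta_K\to0$ and $h_K:=\delta_K\log K\to0$. (A1) $R,p$ Lipschitz with $\underline{R}\le R\le\overline{R}$, $0<\underline{p}\le p\le\overline{p}$. (A2) $G$ positive continuous, $\int G=1$, $G(x)=f(x)e^{-|x|}$ with $0<\min f\le f\le\sup f<\infty$. (A3) $u^{K,0}(i\delta_K)\le-A|i\delta_K|+B_1$ for all $i,K$, constants $A,B_1>0$. (A4) There is $L\in(0,1)$ with $|u^{K,0}((i+1)\delta_K)-u^{K,0}(i\delta_K)|\le L\delta_K$. (A5) The linear interpolation of $u^{K,0}$ converges locally uniformly to a continuous $u^0$. Let $u^K$ solve $\frac{d}{dt}u^{K}_i=R(i\delta_K)+\sum_{l}p((l+i)\delta_K)h_KG(lh_K)e^{\log K(u^{K}_{l+i}-u^{K}_i)}$, $u^K_i(0)=u^{K,0}(i\delta_K)$, and $\widetilde u^K(t,x)=u^K_i(t)(1-\frac{x}{\delta_K}+i)+u^K_{i+1}(t)(\frac{x}{\delta_K}-i)$ for $x\in[i\delta_K,(i+1)\delta_K)$. Define $\underline{u}(t,x)=\liminf_{K\to\infty,(s,y)\to(t,x)}\widetilde u^K(s,y)$. *)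

theory Defs
  imports "HOL-Analysis.Analysis"
begin

definition interp :: "real \<Rightarrow> (int \<Rightarrow> real) \<Rightarrow> real \<Rightarrow> real" where
  "interp d v x = (let i = \<lfloor>x / d\<rfloor> in
     v i * (1 - x / d + of_int i) + v (i + 1) * (x / d - of_int i))"

definition lower_relaxed :: "(nat \<Rightarrow> real \<Rightarrow> real \<Rightarrow> real) \<Rightarrow> real \<Rightarrow> real \<Rightarrow> ereal" where
  "lower_relaxed w t x =
     Liminf (sequentially \<times>\<^sub>F nhds (t, x)) (\<lambda>(K, (s, y)). ereal (w K s y))"

end

theory Submission
  imports Defs
begin

lemma deriv_lb:
  fixes f :: "real \<Rightarrow> real"
  assumes "0 \<le> a" "a \<le> b"
    and D: "\<And>s. a \<le> s \<Longrightarrow> s \<le> b \<Longrightarrow> \<exists>D. (f has_real_derivative D) (at s within {0..}) \<and> c \<le> D"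
  shows "c * (b - a) \<le> f b - f a"
proof -
  define g where "g s = f s - c * s" for s
  have cf: "continuous_on {a..b} f"
  proof (rule continuous_on_eq_continuous_within[THEN iffD2], rule ballI)
    fix s assume "s \<in> {a..b}"
    then obtain D where D1: "(f has_real_derivative D) (at s within {0..})"
      using D[of s] by auto
    hence "continuous (at s within {0..}) f" by (rule DERIV_continuous)
    thus "continuous (at s within {a..b}) f"
      by (rule continuous_within_subset) (use assms(1) in auto)
  qed
  have "g a \<le> g b"
  proof (rule DERIV_nonneg_imp_increasing_open[OF \<open>a \<le> b\<close>])
    fix s assume s: "a < s" "s < b"
    then obtain D where D1: "(f has_real_derivative D) (at s within {0..})" and D2: "c \<le> D"
      using D[of s] by auto
    have "s \<in> interior {0..}" using s assms(1) by (simp add: interior_real_atLeast)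
    hence "(f has_real_derivative D) (at s)" using D1 at_within_interior by metis
    hence "(g has_real_derivative D - c) (at s)" unfolding g_def
      by (auto intro!: derivative_eq_intros)
    thus "\<exists>y. (g has_real_derivative y) (at s) \<and> 0 \<le> y" using D2 by auto
  next
    show "continuous_on {a..b} g" unfolding g_def
      by (intro continuous_intros cf)
  qed
  thus ?thesis unfolding g_def by (simp add: algebra_simps)
qed

lemma interp_grid:
  assumes "d \<noteq> 0"
  shows "interp d v (of_int j * d) = v j"
  using assms by (simp add: interp_def)

lemma interp_ge:
  assumes "d > 0" "v \<lfloor>z / d\<rfloor> \<ge> b" "v (\<lfloor>z / d\<rfloor> + 1) \<ge> b"
  shows "interp d v z \<ge> b"
proof -
  define i where "i = \<lfloor>z / d\<rfloor>"
  define th where "th = z / d - of_int i"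
  have th: "0 \<le> th" "th \<le> 1" unfolding th_def i_def by linarith+
  have "interp d v z = v i * (1 - th) + v (i+1) * th"
    unfolding interp_def i_def th_def Let_def by (simp add: algebra_simps)
  also have "\<dots> \<ge> b * (1 - th) + b * th"
    using th assms(2,3) unfolding i_def by (intro add_mono mult_right_mono) auto
  finally show ?thesis by (simp add: algebra_simps)
qed

theorem lemma5p2:
  fixes R p G :: "real \<Rightarrow> real"
    and \<delta> :: "nat \<Rightarrow> real"
    and u0 :: "nat \<Rightarrow> int \<Rightarrow> real"
    and u0lim :: "real \<Rightarrow> real"
    and u :: "nat \<Rightarrow> int \<Rightarrow> real \<Rightarrow> real"
    and A B1 L :: real
  assumes delta_pos: "\<And>K. K \<ge> 1 \<Longrightarrow> \<delta> K > 0"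
    and delta_lim: "\<delta> \<longlonglongrightarrow> 0"
    and h_lim: "(\<lambda>K. \<delta> K * ln (real K)) \<longlonglongrightarrow> 0"
    \<comment> \<open>(A1)\<close>
    and R_lip: "\<exists>C. C-lipschitz_on UNIV R"
    and p_lip: "\<exists>C. C-lipschitz_on UNIV p"
    and R_bdd: "\<exists>Rlo Rhi. \<forall>x. Rlo \<le> R x \<and> R x \<le> Rhi"
    and p_bdd: "\<exists>plo phi. 0 < plo \<and> (\<forall>x. plo \<le> p x \<and> p x \<le> phi)"
    \<comment> \<open>(A2)\<close>
    and G_pos: "\<And>x. G x > 0"
    and G_cont: "continuous_on UNIV G"
    and G_int: "(G has_integral 1) UNIV"
    and G_f: "\<exists>c C. 0 < c \<and> (\<forall>x. c \<le> G x * exp \<bar>x\<bar> \<and> G x * exp \<bar>x\<bar> \<le> C)"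
    \<comment> \<open>(A3)\<close>
    and A_pos: "A > 0" and B1_pos: "B1 > 0"
    and A3: "\<And>K i. K \<ge> 1 \<Longrightarrow> u0 K i \<le> - A * \<bar>of_int i * \<delta> K\<bar> + B1"
    \<comment> \<open>(A4)\<close>
    and L_pos: "0 < L" and L_lt1: "L < 1"
    and A4: "\<And>K i. K \<ge> 1 \<Longrightarrow> \<bar>u0 K (i + 1) - u0 K i\<bar> \<le> L * \<delta> K"
    \<comment> \<open>(A5)\<close>
    and u0lim_cont: "continuous_on UNIV u0lim"
    and A5: "\<And>a b. uniform_limit {a..b} (\<lambda>K. interp (\<delta> K) (u0 K)) u0lim sequentially"
    \<comment> \<open>u^K solves the lattice system with initial data u^{K,0}\<close>
    and u_init: "\<And>K i. K \<ge> 1 \<Longrightarrow> u K i 0 = u0 K i"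
    and u_ode: "\<And>K i t. K \<ge> 1 \<Longrightarrow> t \<ge> 0 \<Longrightarrow>
       \<exists>S. ((\<lambda>l::int. p ((of_int l + of_int i) * \<delta> K) * (\<delta> K * ln (real K))
                 * G (of_int l * (\<delta> K * ln (real K)))
                 * exp (ln (real K) * (u K (l + i) t - u K i t))) has_sum S) UNIV
           \<and> ((\<lambda>s. u K i s) has_real_derivative (R (of_int i * \<delta> K) + S)) (at t within {0..})"
  shows "\<And>t x y. t > 0 \<Longrightarrow>
     lower_relaxed (\<lambda>K s z. interp (\<delta> K) (\<lambda>i. u K i s) z) t (x + y)
       \<le> lower_relaxed (\<lambda>K s z. interp (\<delta> K) (\<lambda>i. u K i s) z) t x + ereal \<bar>y\<bar>"
proof -
  obtain Rlo Rhi where Rb: "\<And>x. Rlo \<le> R x" using R_bdd by blast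
  obtain plo phi where plo: "0 < plo" and pb: "\<And>x. plo \<le> p x" using p_bdd by blast
  obtain c C where c: "0 < c" and cb: "\<And>x. c \<le> G x * exp \<bar>x\<bar>" using G_f by blast
  define T where "T K i s l = p ((of_int l + of_int i) * \<delta> K) * (\<delta> K * ln (real K))
                 * G (of_int l * (\<delta> K * ln (real K)))
                 * exp (ln (real K) * (u K (l + i) s - u K i s))" for K i s and l :: int
  have Tnn: "0 \<le> T K i s l" if "K \<ge> 1" for K i s l
  proof -
    have "0 \<le> p ((of_int l + of_int i) * \<delta> K)" using pb[of "(of_int l + of_int i) * \<delta> K"] plo by linarith
    moreover have "0 \<le> \<delta> K * ln (real K)" using delta_pos[OF that] that by simp
    moreover have "0 \<le> G (of_int l * (\<delta> K * ln (real K)))" using G_pos less_imp_le by blast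
    ultimately show ?thesis unfolding T_def by simp
  qed
  have mono: "(Rlo + M) * (s2 - s1) \<le> u K j s2 - u K j s1"
    if K: "K \<ge> 1" and s12: "0 \<le> s1" "s1 \<le> s2"
      and MS: "\<And>s' S. s1 \<le> s' \<Longrightarrow> s' \<le> s2 \<Longrightarrow> (T K j s' has_sum S) UNIV \<Longrightarrow> M \<le> S"
    for K j s1 s2 M
  proof (rule deriv_lb[OF s12])
    fix s assume s: "s1 \<le> s" "s \<le> s2"
    obtain S where S1: "(T K j s has_sum S) UNIV"
      and S2: "((\<lambda>s. u K j s) has_real_derivative (R (of_int j * \<delta> K) + S)) (at s within {0..})"
      using u_ode[OF K, of s j] s s12 unfolding T_def by auto
    have "Rlo + M \<le> R (of_int j * \<delta> K) + S" using Rb MS[OF s S1] by (intro add_mono) auto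
    thus "\<exists>D. (u K j has_real_derivative D) (at s within {0..}) \<and> Rlo + M \<le> D" using S2 by auto
  qed
  have Snn: "0 \<le> S" if "K \<ge> 1" "(T K j s has_sum S) UNIV" for K j s S
    using has_sum_nonneg[OF that(2)] Tnn[OF that(1)] by auto
  have Sge: "sum (T K j s) Ls \<le> S" if "K \<ge> 1" "(T K j s has_sum S) UNIV" "finite Ls" for K j s S Ls
    by (rule has_sum_mono_neutral[OF has_sum_finite[OF that(3)] that(2)]) (use Tnn[OF that(1)] in auto)
  show "\<And>t x y. t > 0 \<Longrightarrow>
     lower_relaxed (\<lambda>K s z. interp (\<delta> K) (\<lambda>i. u K i s) z) t (x + y)
       \<le> lower_relaxed (\<lambda>K s z. interp (\<delta> K) (\<lambda>i. u K i s) z) t x + ereal \<bar>y\<bar>"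
  proof -
    fix t x y :: real assume tpos: "t > 0"
    define w where "w K s z = interp (\<delta> K) (\<lambda>i. u K i s) z" for K s z
    define g where "g = (\<lambda>(K::nat, (s::real, z::real)). ereal (w K s z))"
    have LR: "lower_relaxed (\<lambda>K s z. interp (\<delta> K) (\<lambda>i. u K i s) z) t v
       = Liminf (sequentially \<times>\<^sub>F nhds (t, v)) g" for v
      unfolding lower_relaxed_def g_def w_def by simp
    show "lower_relaxed (\<lambda>K s z. interp (\<delta> K) (\<lambda>i. u K i s) z) t (x + y)
       \<le> lower_relaxed (\<lambda>K s z. interp (\<delta> K) (\<lambda>i. u K i s) z) t x + ereal \<bar>y\<bar>"
    proof (rule ccontr)
      assume "\<not> ?thesis"
      hence lt: "Liminf (sequentially \<times>\<^sub>F nhds (t, x)) g + ereal \<bar>y\<bar>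
                 < Liminf (sequentially \<times>\<^sub>F nhds (t, x + y)) g" unfolding LR by simp
      then obtain a where a1: "Liminf (sequentially \<times>\<^sub>F nhds (t, x)) g + ereal \<bar>y\<bar> < ereal a"
        and a2: "ereal a < Liminf (sequentially \<times>\<^sub>F nhds (t, x + y)) g"
        using ereal_dense2 by blast
      have "Liminf (sequentially \<times>\<^sub>F nhds (t, x)) g < ereal (a - \<bar>y\<bar>)"
        using a1 by (cases "Liminf (sequentially \<times>\<^sub>F nhds (t, x)) g") auto
      then obtain b where b1: "Liminf (sequentially \<times>\<^sub>F nhds (t, x)) g < ereal b"
        and b2: "ereal b < ereal (a - \<bar>y\<bar>)"
        using ereal_dense2 by blast
      define \<epsilon> where "\<epsilon> = (a - b - \<bar>y\<bar>) / 3"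
      have eps3: "3 * \<epsilon> = a - b - \<bar>y\<bar>" unfolding \<epsilon>_def by simp
      have eps: "\<epsilon> > 0" using b2 unfolding \<epsilon>_def by simp
      have "eventually (\<lambda>q. ereal a < g q) (sequentially \<times>\<^sub>F nhds (t, x + y))"
        using less_LiminfD[OF a2] .
      then obtain Pf Pg where Pf: "eventually Pf sequentially" and Pg: "eventually Pg (nhds (t, x + y))"
        and PP: "\<And>K q. Pf K \<Longrightarrow> Pg q \<Longrightarrow> ereal a < g (K, q)"
        unfolding eventually_prod_filter by blast
      obtain N1 where N1: "\<And>K. K \<ge> N1 \<Longrightarrow> Pf K" using Pf unfolding eventually_sequentially by blast
      obtain r where r: "r > 0" and rP: "\<And>q. dist q (t, x + y) < r \<Longrightarrow> Pg q"
        using Pg unfolding eventually_nhds_metric by blast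
      have high: "a < w K s z" if "K \<ge> N1" "\<bar>s - t\<bar> + \<bar>z - (x + y)\<bar> < r" for K s z
      proof -
        have "dist (s, z) (t, x + y) \<le> \<bar>s - t\<bar> + \<bar>z - (x + y)\<bar>"
          unfolding dist_Pair_Pair dist_real_def using sqrt_sum_squares_le_sum_abs by simp
        hence "Pg (s, z)" using rP that(2) by simp
        thus ?thesis using PP[OF N1[OF that(1)], of "(s, z)"] unfolding g_def by simp
      qed
      have cpt: "compact (u0lim ` {x-1..x+1})"
        by (rule compact_continuous_image) (use u0lim_cont continuous_on_subset in auto)
      then obtain Bd where Bd: "\<And>z. z \<in> {x-1..x+1} \<Longrightarrow> \<bar>u0lim z\<bar> \<le> Bd"
        using compact_imp_bounded[OF cpt] unfolding bounded_iff by (auto simp: real_norm_def) (meson atLeastAtMost_iff)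
      have "\<forall>\<^sub>F K in sequentially. \<forall>z\<in>{x-1..x+1}. dist (interp (\<delta> K) (u0 K) z) (u0lim z) < 1"
        using uniform_limitD[OF A5[of "x-1" "x+1"]] by simp
      then obtain N2 where N2: "\<And>K z. K \<ge> N2 \<Longrightarrow> z\<in>{x-1..x+1} \<Longrightarrow> dist (interp (\<delta> K) (u0 K) z) (u0lim z) < 1"
        unfolding eventually_sequentially by blast
      have low0: "- Bd - 1 \<le> u0 K j" if "K \<ge> N2" "K \<ge> 1" "\<bar>of_int j * \<delta> K - x\<bar> \<le> 1" for K j
      proof -
        have z: "of_int j * \<delta> K \<in> {x-1..x+1}" using that(3) by auto
        have "interp (\<delta> K) (u0 K) (of_int j * \<delta> K) = u0 K j"
          using delta_pos[OF that(2)] interp_grid by simp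
        thus ?thesis using N2[OF that(1) z] Bd[OF z] unfolding dist_real_def by linarith
      qed
      define \<rho> where "\<rho> = min (r/8) (min (t/2) (1/2))"
      define \<tau> where "\<tau> = min (r/8) (min (t/2) (\<epsilon> / (\<bar>Rlo\<bar> + 1)))"
      define \<eta> where "\<eta> = min \<epsilon> (r/8)"
      have rho: "\<rho> > 0" "\<rho> \<le> r/8" "\<rho> \<le> t/2" "\<rho> \<le> 1/2" unfolding \<rho>_def using r tpos by auto
      have ep1: "\<epsilon> / (\<bar>Rlo\<bar> + 1) > 0" using eps by (simp add: add_pos_nonneg)
      have tau0a: "\<tau> > 0" unfolding \<tau>_def using r tpos ep1 by simp
      have tau0b: "\<tau> \<le> r/8" unfolding \<tau>_def by (rule min.cobounded1)
      have tau0c: "\<tau> \<le> t/2" unfolding \<tau>_def by (rule order.trans[OF min.cobounded2 min.cobounded1])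
      have tau0d: "\<tau> \<le> \<epsilon> / (\<bar>Rlo\<bar> + 1)" unfolding \<tau>_def by (rule order.trans[OF min.cobounded2 min.cobounded2])
      note tau0 = tau0a tau0b tau0c tau0d
      have tau: "\<tau> > 0" "\<tau> \<le> r/8" "\<tau> \<le> t/2" "\<tau> * (\<bar>Rlo\<bar> + 1) \<le> \<epsilon>"
        using tau0 by (auto simp: pos_le_divide_eq add_pos_nonneg)
      have eta: "\<eta> > 0" "\<eta> \<le> \<epsilon>" "\<eta> \<le> r/8" unfolding \<eta>_def using r eps by auto
      define dm where "dm = min (r/8) (min (\<eta>/2) (1/2))"
      have "dm > 0" unfolding dm_def using r eta by auto
      then obtain N3 where N3: "\<And>K. K \<ge> N3 \<Longrightarrow> norm (\<delta> K - 0) < dm"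
        using delta_lim unfolding LIMSEQ_iff by blast
      define \<Lambda> where "\<Lambda> = 2 * (\<bar>b\<bar> + Bd + 2 + 2 * t * \<bar>Rlo\<bar>) / (plo * c * \<eta> * \<tau>)"
      define N4 where "N4 = nat \<lceil>exp \<Lambda>\<rceil> + 1"
      have lnK: "\<Lambda> \<le> ln (real K)" if "K \<ge> N4" for K
      proof -
        have "exp \<Lambda> \<le> real K" using that unfolding N4_def by linarith
        moreover have "real K > 0" using exp_gt_zero[of \<Lambda>] calculation by linarith
        ultimately have "ln (exp \<Lambda>) \<le> ln (real K)" by (subst ln_le_cancel_iff) auto
        thus ?thesis by simp
      qed
      define N0 where "N0 = max (max N1 N2) (max (max N3 N4) 2)"
      have key: "b \<le> w K s z" if K: "K \<ge> N0" and st: "\<bar>s - t\<bar> < \<rho>" and zx: "\<bar>z - x\<bar> < \<rho>" for K s z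
      proof -
        define d where "d = \<delta> K"
        have K1: "K \<ge> 1" and K2: "K \<ge> 2" using K unfolding N0_def by auto
        have d: "d > 0" unfolding d_def using delta_pos[OF K1] .
        have dsmall: "d < r/8" "d < \<eta>/2" "d < 1/2" using N3[of K] K unfolding N0_def dm_def d_def by auto
        have lnpos: "ln (real K) > 0" using K2 by simp
        have LK: "\<Lambda> \<le> ln (real K)" using lnK[of K] K unfolding N0_def by auto
        have pt: "b \<le> u K j s" if jz: "\<bar>of_int j * d - z\<bar> \<le> d" for j
        proof (rule ccontr)
          assume "\<not> b \<le> u K j s"
          hence ujs: "u K j s < b" by simp
          have jdx: "\<bar>of_int j * d - x\<bar> \<le> \<rho> + d" using jz zx by linarith
          have s_tau: "0 \<le> s - \<tau>" using st rho tau by linarith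
          have m0: "Rlo * (s2 - s1) \<le> u K j s2 - u K j s1" if "0 \<le> s1" "s1 \<le> s2" for s1 s2
            using mono[OF K1 that, of j 0] Snn[OF K1] by auto
          have upper: "u K j s' \<le> b + \<epsilon>" if "s - \<tau> \<le> s'" "s' \<le> s" for s'
          proof -
            have "Rlo * (s - s') \<le> u K j s - u K j s'" using m0[of s' s] that s_tau by linarith
            moreover have "- Rlo * (s - s') \<le> \<bar>Rlo\<bar> * \<tau>"
              using that by (intro order.trans[OF _ mult_mono[of "- Rlo" "\<bar>Rlo\<bar>" "s - s'" \<tau>]]) auto
            moreover have "\<bar>Rlo\<bar> * \<tau> \<le> \<epsilon>" using tau(4) tau(1) by (simp add: algebra_simps)
            ultimately show ?thesis using ujs by linarith
          qed
          define l0 where "l0 = \<lceil>(y - \<eta>) / d\<rceil>"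
          define n where "n = nat \<lfloor>\<eta> / d\<rfloor>"
          define Ls where "Ls = {l0..<l0 + int n}"
          have lrange: "y - \<eta> \<le> of_int l * d \<and> of_int l * d \<le> y" if "l \<in> Ls" for l
          proof -
            have l1: "l0 \<le> l" "l \<le> l0 + int n - 1" using that unfolding Ls_def by auto
            have "(y - \<eta>) / d \<le> of_int l" using l1(1) unfolding l0_def by linarith
            hence A: "y - \<eta> \<le> of_int l * d" using d by (simp add: pos_divide_le_eq)
            have "of_int l0 < (y - \<eta>) / d + 1" unfolding l0_def by linarith
            moreover have "real n \<le> \<eta> / d" unfolding n_def using eta d by (simp add: of_nat_nat)
            ultimately have "of_int l < y / d" using l1(2) by (simp add: diff_divide_distrib)
            hence "of_int l * d < y" using d by (simp add: pos_less_divide_eq)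
            thus ?thesis using A by simp
          qed
          have cardLs: "card Ls = n" unfolding Ls_def by simp
          have nd: "\<eta> / 2 \<le> real n * d"
          proof -
            have "\<eta> / d - 1 < real n" unfolding n_def using eta d by (simp add: of_nat_nat)
            hence "\<eta> - d < real n * d" using d by (simp add: field_simps)
            thus ?thesis using dsmall by linarith
          qed
          define h where "h = d * ln (real K)"
          have hpos: "h > 0" unfolding h_def using d lnpos by simp
          have termlb: "plo * h * c \<le> T K j s' l" if s': "s - \<tau> \<le> s'" "s' \<le> s" and l: "l \<in> Ls" for s' l
          proof -
            have lr: "y - \<eta> \<le> of_int l * d" "of_int l * d \<le> y" using lrange[OF l] by auto
            have "\<bar>s' - t\<bar> + \<bar>of_int (l + j) * d - (x + y)\<bar> < r"
            proof -
              have "\<bar>s' - t\<bar> \<le> \<tau> + \<rho>" using s' st by linarith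
              moreover have "\<bar>of_int (l + j) * d - (x + y)\<bar> \<le> \<eta> + (\<rho> + d)"
                using lr jdx by (simp add: distrib_right)
              ultimately show ?thesis using tau rho eta dsmall r by linarith
            qed
            hence hi0: "a < w K s' (of_int (l + j) * d)"
              using high[of K s' "of_int (l + j) * d"] K unfolding N0_def by auto
            have "w K s' (of_int (l + j) * d) = u K (l + j) s'"
              unfolding w_def d_def by (rule interp_grid) (use d d_def in simp)
            hence hi: "a < u K (l + j) s'" using hi0 by simp
            have Dge: "\<bar>y\<bar> + 2 * \<epsilon> \<le> u K (l + j) s' - u K j s'"
              using hi upper[OF s'] eps3 by linarith
            have absl: "\<bar>of_int l * d\<bar> \<le> \<bar>y\<bar> + \<epsilon>" using lr eta by linarith
            have Gl: "c * exp (- \<bar>of_int l * h\<bar>) \<le> G (of_int l * h)"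
              using cb[of "of_int l * h"] by (simp add: exp_minus field_simps)
            have eq: "\<bar>of_int l * h\<bar> = \<bar>of_int l * d\<bar> * ln (real K)"
              unfolding h_def using lnpos by (simp add: abs_mult)
            have "c * exp (- \<bar>of_int l * h\<bar>) * exp (ln (real K) * (u K (l + j) s' - u K j s'))
                = c * exp (ln (real K) * ((u K (l + j) s' - u K j s') - \<bar>of_int l * d\<bar>))"
              unfolding eq mult.assoc exp_add[symmetric] by (simp add: algebra_simps)
            also have "\<dots> \<ge> c * 1"
              using c lnpos Dge absl eps by (intro mult_left_mono) auto
            finally have E: "c \<le> G (of_int l * h) * exp (ln (real K) * (u K (l + j) s' - u K j s'))"
              using Gl by (smt (verit) exp_gt_zero mult_right_mono)
            have pp: "plo \<le> p ((of_int l + of_int j) * d)" using pb by auto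
            have "plo * h * c \<le> p ((of_int l + of_int j) * d) * h * (G (of_int l * h) * exp (ln (real K) * (u K (l + j) s' - u K j s')))"
            proof -
              define P where "P = p ((of_int l + of_int j) * d)"
              have "plo * h \<le> P * h" using pp hpos unfolding P_def by (simp add: mult_right_mono)
              hence "plo * h * c \<le> P * h * c" using c by (simp add: mult_right_mono)
              also have "\<dots> \<le> P * h * (G (of_int l * h) * exp (ln (real K) * (u K (l + j) s' - u K j s')))"
                using E pp plo hpos unfolding P_def by (intro mult_left_mono) auto
              finally show ?thesis unfolding P_def .
            qed
            thus ?thesis unfolding T_def h_def d_def by (simp add: mult.assoc)
          qed
          define M where "M = plo * c * ln (real K) * (\<eta> / 2)"
          have MS: "M \<le> S" if "s - \<tau> \<le> s'" "s' \<le> s" "(T K j s' has_sum S) UNIV" for s' S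
          proof -
            have "real (card Ls) * (plo * h * c) \<le> sum (T K j s') Ls"
              using termlb[OF that(1,2)] by (intro sum_bounded_below) auto
            moreover have "sum (T K j s') Ls \<le> S" using Sge[OF K1 that(3)] Ls_def by simp
            moreover have "M \<le> real n * (plo * h * c)"
            proof -
              have "M = plo * c * ln (real K) * (\<eta> / 2)" unfolding M_def ..
              also have "\<dots> \<le> plo * c * ln (real K) * (real n * d)"
                using nd plo c lnpos by (intro mult_left_mono) auto
              finally show ?thesis unfolding h_def by (simp add: algebra_simps)
            qed
            ultimately show ?thesis unfolding cardLs by linarith
          qed
          have i1: "(Rlo + M) * \<tau> \<le> u K j s - u K j (s - \<tau>)"
            using mono[OF K1 s_tau, of s j M] MS tau by auto
          have i2: "Rlo * (s - \<tau>) \<le> u K j (s - \<tau>) - u K j 0" using m0[of 0 "s - \<tau>"] s_tau by simp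
          have i3: "- Bd - 1 \<le> u K j 0"
            using low0[of K j] u_init[OF K1] K K1 jdx rho dsmall unfolding N0_def d_def by auto
          have i4: "- (2 * t * \<bar>Rlo\<bar>) \<le> Rlo * s"
          proof -
            have "0 \<le> s" "s \<le> 2 * t" using st rho by linarith+
            hence "\<bar>Rlo * s\<bar> \<le> \<bar>Rlo\<bar> * (2 * t)" by (simp add: abs_mult mult_left_mono)
            moreover have "\<bar>Rlo\<bar> * (2 * t) = 2 * t * \<bar>Rlo\<bar>" by simp
            ultimately show ?thesis by linarith
          qed
          have i5: "\<bar>b\<bar> + Bd + 2 + 2 * t * \<bar>Rlo\<bar> \<le> M * \<tau>"
          proof -
            have pos: "plo * c * \<eta> * \<tau> > 0" using plo c eta tau by simp
            have "\<bar>b\<bar> + Bd + 2 + 2 * t * \<bar>Rlo\<bar> = \<Lambda> * (plo * c * \<eta> * \<tau>) / 2"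
              unfolding \<Lambda>_def using pos plo c eta tau by (simp add: field_simps)
            also have "\<dots> \<le> ln (real K) * (plo * c * \<eta> * \<tau>) / 2"
              using LK pos by (intro divide_right_mono mult_right_mono) auto
            also have "\<dots> = M * \<tau>" unfolding M_def by (simp add: algebra_simps)
            finally show ?thesis .
          qed
          have "u K j s \<ge> - Bd - 1 + Rlo * s + M * \<tau>" using i1 i2 i3 by (simp add: algebra_simps)
          hence "u K j s \<ge> \<bar>b\<bar> + 1" using i4 i5 by linarith
          thus False using ujs by linarith
        qed
        define i where "i = \<lfloor>z / d\<rfloor>"
        have "of_int i \<le> z / d" "z / d < of_int i + 1" unfolding i_def by linarith+
        hence zi: "of_int i * d \<le> z" "z < (of_int i + 1) * d" using d by (simp_all add: field_simps)
        have "b \<le> u K i s" using pt[of i] zi d by (simp add: algebra_simps)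
        moreover have "b \<le> u K (i + 1) s" using pt[of "i+1"] zi d by (simp add: algebra_simps)
        ultimately show ?thesis unfolding w_def d_def[symmetric] using interp_ge[where v="\<lambda>i. u K i s" and z=z and b=b, OF d]
          unfolding i_def by simp
      qed
      have "eventually (\<lambda>q. ereal b \<le> g q) (sequentially \<times>\<^sub>F nhds (t, x))"
        unfolding eventually_prod_filter
      proof (intro exI conjI allI impI)
        show "eventually (\<lambda>K. K \<ge> N0) sequentially" by simp
        show "eventually (\<lambda>q. dist q (t, x) < \<rho>) (nhds (t, x))" using rho(1) eventually_nhds_metric by blast
        fix K :: nat and q :: "real \<times> real" assume "K \<ge> N0" "dist q (t, x) < \<rho>"
        moreover obtain s z where q: "q = (s, z)" by fastforce
        moreover have "\<bar>s - t\<bar> \<le> dist q (t, x)" "\<bar>z - x\<bar> \<le> dist q (t, x)"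
          unfolding q dist_Pair_Pair dist_real_def by (auto intro: real_sqrt_sum_squares_ge1 real_sqrt_sum_squares_ge2)
        ultimately show "ereal b \<le> g (K, q)" using key[of K s z] unfolding g_def by simp
      qed
      hence "ereal b \<le> Liminf (sequentially \<times>\<^sub>F nhds (t, x)) g" by (rule Liminf_bounded)
      thus False using b1 by simp
    qed
  qed
qed

end
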